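(* Let $K:X\times X\to\mathbb{C}$ be positive definite and assume $\delta_x\in\mathscr{H}(K)$ for all $x\in X$. Let $F\subset X$ be a nonempty finite subset, $K_F=(K(x,y))_{x,y\in F}$, and let $\lambda$ be any eigenvalue of $K_F$. Then $1\le\lambda\sum_{x\in F}\|\delta_x\|^2_{\mathscr{H}(K)}$.
   Context: $\delta_x$ denotes the function on $X$ equal to $1$ at $x$ and $0$ elsewhere. $\mathscr{H}(K)$ is the reproducing kernel Hilbert space of $K$: the completion of the span of $\{K(\cdot,x)\}$ with $\langle K(\cdot,x),K(\cdot,y)\rangle=K(x,y)$, a space of functions on $X$ with $\langle K(\cdot,x),h\rangle=h(x)$. *)

theory Defs
  imports "HOL-Analysis.Analysis"
begin

text \<open>Positive definite kernel (in the sense of reproducing kernels: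
  all Gram forms are nonnegative reals).\<close>
definition pos_def_kernel :: "('a \<Rightarrow> 'a \<Rightarrow> complex) \<Rightarrow> bool" where
  "pos_def_kernel K \<longleftrightarrow>
     (\<forall>F (c :: 'a \<Rightarrow> complex). finite F \<longrightarrow>
        (let s = (\<Sum>x\<in>F. \<Sum>y\<in>F. cnj (c x) * c y * K x y) in Im s = 0 \<and> 0 \<le> Re s))"

definition csupp :: "('a \<Rightarrow> complex) \<Rightarrow> 'a set" where
  "csupp c = {y. c y \<noteq> 0}"

definition kfun :: "('a \<Rightarrow> 'a \<Rightarrow> complex) \<Rightarrow> ('a \<Rightarrow> complex) \<Rightarrow> 'a \<Rightarrow> complex" where
  "kfun K c = (\<lambda>z. \<Sum>y\<in>csupp c. c y * K z y)"

text \<open>Squared norm in the span: \<open>\<langle>h,h\<rangle>\<close> with \<open>\<langle>K(\<cdot>,x),K(\<cdot>,y)\<rangle> = K(x,y)\<close>.\<close>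
definition knorm2 :: "('a \<Rightarrow> 'a \<Rightarrow> complex) \<Rightarrow> ('a \<Rightarrow> complex) \<Rightarrow> real" where
  "knorm2 K c = Re (\<Sum>x\<in>csupp c. \<Sum>y\<in>csupp c. cnj (c x) * c y * K x y)"

text \<open>A sequence of span elements that is Cauchy in the span norm and converges
  pointwise to \<open>f\<close> (this is how the completion is realised as functions on X).\<close>
definition approx_seq :: "('a \<Rightarrow> 'a \<Rightarrow> complex) \<Rightarrow> (nat \<Rightarrow> 'a \<Rightarrow> complex) \<Rightarrow> ('a \<Rightarrow> complex) \<Rightarrow> bool" where
  "approx_seq K c f \<longleftrightarrow>
     (\<forall>n. finite (csupp (c n))) \<and>
     (\<forall>e>0. \<exists>N. \<forall>m\<ge>N. \<forall>n\<ge>N. knorm2 K (\<lambda>y. c m y - c n y) < e) \<and>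
     (\<forall>z. (\<lambda>n. kfun K (c n) z) \<longlonglongrightarrow> f z)"

definition in_rkhs :: "('a \<Rightarrow> 'a \<Rightarrow> complex) \<Rightarrow> ('a \<Rightarrow> complex) \<Rightarrow> bool" where
  "in_rkhs K f \<longleftrightarrow> (\<exists>c. approx_seq K c f)"

definition rkhs_norm2 :: "('a \<Rightarrow> 'a \<Rightarrow> complex) \<Rightarrow> ('a \<Rightarrow> complex) \<Rightarrow> real" where
  "rkhs_norm2 K f = (THE r. \<exists>c. approx_seq K c f \<and> (\<lambda>n. knorm2 K (c n)) \<longlonglongrightarrow> r)"

definition delta :: "'a \<Rightarrow> 'a \<Rightarrow> complex" where
  "delta x = (\<lambda>z. if z = x then 1 else 0)"

definition is_eigenvalue_on :: "('a \<Rightarrow> 'a \<Rightarrow> complex) \<Rightarrow> 'a set \<Rightarrow> complex \<Rightarrow> bool" where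
  "is_eigenvalue_on K F l \<longleftrightarrow>
     (\<exists>v :: 'a \<Rightarrow> complex. (\<exists>x\<in>F. v x \<noteq> 0) \<and> (\<forall>x\<in>F. (\<Sum>y\<in>F. K x y * v y) = l * v x))"

end

theory Submission
  imports Defs
begin

definition BS :: "('a \<Rightarrow> 'a \<Rightarrow> complex) \<Rightarrow> 'a set \<Rightarrow> ('a \<Rightarrow> complex) \<Rightarrow> ('a \<Rightarrow> complex) \<Rightarrow> complex" where
  "BS K S a b = (\<Sum>x\<in>S. \<Sum>y\<in>S. cnj (a x) * b y * K x y)"

lemma pd_real:
  assumes "pos_def_kernel K" "finite S"
  shows "Im (BS K S a a) = 0" "0 \<le> Re (BS K S a a)"
  using assms unfolding pos_def_kernel_def BS_def Let_def by auto

lemma herm: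
  assumes "pos_def_kernel K"
  shows "K y x = cnj (K x y)"
proof (cases "x = y")
  case True
  have "Im (BS K {x} (\<lambda>_. 1) (\<lambda>_. 1)) = 0" by (rule pd_real[OF assms]) simp
  then show ?thesis using True by (simp add: BS_def complex_eq_iff)
next
  case False
  have 1: "Im (BS K {x,y} (\<lambda>z. if z = x then 1 else 1) (\<lambda>z. if z = x then 1 else 1)) = 0"
    by (rule pd_real[OF assms]) simp
  have 2: "Im (BS K {x,y} (\<lambda>z. if z = x then 1 else \<i>) (\<lambda>z. if z = x then 1 else \<i>)) = 0"
    by (rule pd_real[OF assms]) simp
  have 3: "Im (BS K {x} (\<lambda>_. 1) (\<lambda>_. 1)) = 0" by (rule pd_real[OF assms]) simp
  have 4: "Im (BS K {y} (\<lambda>_. 1) (\<lambda>_. 1)) = 0" by (rule pd_real[OF assms]) simp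
  from 1 False have a: "Im (K x x) + Im (K x y) + Im (K y x) + Im (K y y) = 0" by (simp add: BS_def)
  from 2 False have b: "Im (K x x) + Re (K x y) - Re (K y x) + Im (K y y) = 0" by (simp add: BS_def)
  from 3 have c: "Im (K x x) = 0" by (simp add: BS_def)
  from 4 have d: "Im (K y y) = 0" by (simp add: BS_def)
  show ?thesis using a b c d by (simp add: complex_eq_iff)
qed

lemma BS_herm:
  assumes "pos_def_kernel K"
  shows "BS K S b a = cnj (BS K S a b)"
proof -
  have "BS K S b a = (\<Sum>x\<in>S. \<Sum>y\<in>S. cnj (b x) * a y * K x y)" by (simp add: BS_def)
  also have "\<dots> = (\<Sum>y\<in>S. \<Sum>x\<in>S. cnj (b x) * a y * K x y)" by (rule sum.swap)
  also have "\<dots> = (\<Sum>y\<in>S. \<Sum>x\<in>S. cnj (cnj (a y) * b x * K y x))"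
    using herm[OF assms] by (intro sum.cong refl) (metis complex_cnj_cnj complex_cnj_mult mult.commute mult.left_commute)
  also have "\<dots> = cnj (BS K S a b)" by (simp add: BS_def cnj_sum)
  finally show ?thesis .
qed

lemma BS_expand:
  "BS K S (\<lambda>x. a x - t * b x) (\<lambda>x. a x - t * b x) =
     BS K S a a - t * BS K S a b - cnj t * BS K S b a + t * cnj t * BS K S b b"
proof -
  have e: "cnj (a x - t * b x) * (a y - t * b y) * K x y =
     cnj (a x) * a y * K x y - t * (cnj (a x) * b y * K x y) - cnj t * (cnj (b x) * a y * K x y)
      + t * cnj t * (cnj (b x) * b y * K x y)" for x y
    by (simp only: complex_cnj_diff complex_cnj_mult) algebra
  show ?thesis unfolding BS_def e
    by (simp only: sum.distrib sum_subtractf flip: sum_distrib_left)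
qed

lemma CS:
  assumes pd: "pos_def_kernel K" and fin: "finite S"
  shows "(cmod (BS K S a b))^2 \<le> Re (BS K S a a) * Re (BS K S b b)"
proof -
  define z where "z = BS K S a b"
  define A where "A = Re (BS K S a a)"
  define C where "C = Re (BS K S b b)"
  have Aeq: "BS K S a a = of_real A" using pd_real(1)[OF pd fin, of a] by (simp add: A_def complex_eq_iff)
  have Ceq: "BS K S b b = of_real C" using pd_real(1)[OF pd fin, of b] by (simp add: C_def complex_eq_iff)
  have C0: "0 \<le> C" using pd_real(2)[OF pd fin] C_def by simp
  have A0: "0 \<le> A" using pd_real(2)[OF pd fin] A_def by simp
  have ba: "BS K S b a = cnj z" unfolding z_def by (rule BS_herm[OF pd])
  have key: "0 \<le> A - 2 * Re (t * z) + (cmod t)^2 * C" for t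
  proof -
    have "0 \<le> Re (BS K S (\<lambda>x. a x - t * b x) (\<lambda>x. a x - t * b x))" by (rule pd_real(2)[OF pd fin])
    also have "\<dots> = Re (of_real A - t * z - cnj (t * z) + t * cnj t * of_real C)"
      unfolding BS_expand Aeq Ceq ba z_def[symmetric] by simp
    also have "t * cnj t = of_real ((cmod t)^2)" by (rule complex_norm_square[symmetric])
    finally show ?thesis by simp
  qed
  show ?thesis
  proof (cases "C = 0")
    case True
    have "z = 0"
    proof (rule ccontr)
      assume "z \<noteq> 0"
      then have p: "0 < (cmod z)^2" by simp
      define s where "s = (A + 1) / (2 * (cmod z)^2)"
      have "0 \<le> A - 2 * Re (of_real s * cnj z * z)" using key[of "of_real s * cnj z"] True by simp
      also have "of_real s * cnj z * z = of_real (s * (cmod z)^2)"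
        by (simp add: complex_norm_square[symmetric] mult.assoc mult.commute)
      also have "s * (cmod z)^2 = (A + 1) / 2" using p by (simp add: s_def)
      finally show False by simp
    qed
    then show ?thesis using A0 C0 z_def A_def C_def by simp
  next
    case False
    then have Cp: "0 < C" using C0 by simp
    have "0 \<le> A - 2 * Re (cnj z / of_real C * z) + (cmod (cnj z / of_real C))^2 * C" by (rule key)
    also have "cnj z / of_real C * z = of_real ((cmod z)^2 / C)"
      by (simp add: complex_norm_square[symmetric] mult.commute)
    also have "(cmod (cnj z / of_real C))^2 * C = (cmod z)^2 / C"
      using Cp by (simp add: norm_divide power_divide power2_eq_square)
    finally have "(cmod z)^2 / C \<le> A" by simp
    then have "(cmod z)^2 \<le> A * C" using Cp by (simp add: divide_le_eq)
    then show ?thesis by (simp add: z_def A_def C_def)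
  qed
qed

lemma BS_add2: "BS K S a (\<lambda>y. b y + c y) = BS K S a b + BS K S a c"
  unfolding BS_def by (simp add: distrib_left distrib_right sum.distrib)

lemma BS_add1: "BS K S (\<lambda>y. a y + b y) c = BS K S a c + BS K S b c"
  unfolding BS_def by (simp add: distrib_left distrib_right sum.distrib)

lemma BS_neg: "BS K S (\<lambda>y. - b y) (\<lambda>y. - b y) = BS K S b b"
  unfolding BS_def by simp

lemma csupp_add: "csupp (\<lambda>y. a y + b y) \<subseteq> csupp a \<union> csupp b"
  unfolding csupp_def by auto

lemma csupp_diff: "csupp (\<lambda>y. a y - b y) \<subseteq> csupp a \<union> csupp b"
  unfolding csupp_def by auto

lemma csupp_neg: "csupp (\<lambda>y. - b y) = csupp b"
  unfolding csupp_def by auto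

lemma kfun_S:
  assumes "finite S" "csupp b \<subseteq> S"
  shows "kfun K b z = (\<Sum>y\<in>S. b y * K z y)"
  unfolding kfun_def
  by (rule sum.mono_neutral_left) (use assms in \<open>auto simp: csupp_def subset_iff\<close>)

lemma BS_kfun:
  assumes "finite S" "csupp b \<subseteq> S"
  shows "BS K S a b = (\<Sum>x\<in>S. cnj (a x) * kfun K b x)"
  unfolding BS_def kfun_S[OF assms] by (simp add: sum_distrib_left mult.assoc)

lemma BS_mono:
  assumes fT: "finite T" and sub: "S \<subseteq> T" and sa: "csupp a \<subseteq> S" and sb: "csupp b \<subseteq> S"
  shows "BS K T a b = BS K S a b"
proof -
  have za: "a x = 0" if "x \<notin> S" for x using sa that by (auto simp: csupp_def)
  have zb: "b x = 0" if "x \<notin> S" for x using sb that by (auto simp: csupp_def)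
  have "BS K T a b = (\<Sum>x\<in>T. \<Sum>y\<in>S. cnj (a x) * b y * K x y)"
    unfolding BS_def
  proof (rule sum.cong[OF refl])
    fix x show "(\<Sum>y\<in>T. cnj (a x) * b y * K x y) = (\<Sum>y\<in>S. cnj (a x) * b y * K x y)"
      by (rule sum.mono_neutral_right[OF fT sub]) (simp add: zb)
  qed
  also have "\<dots> = BS K S a b"
    unfolding BS_def
    by (rule sum.mono_neutral_right[OF fT sub]) (simp add: za)
  finally show ?thesis .
qed

lemma knorm2_S:
  assumes "finite S" "csupp c \<subseteq> S"
  shows "knorm2 K c = Re (BS K S c c)"
  unfolding knorm2_def using BS_mono[OF assms(1,2) order_refl order_refl]
  by (simp add: BS_def)

lemma knorm2_nonneg:
  assumes "pos_def_kernel K" "finite (csupp c)"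
  shows "0 \<le> knorm2 K c"
  using knorm2_S[OF assms(2) order_refl] pd_real(2)[OF assms] by simp

lemma CS_kn:
  assumes pd: "pos_def_kernel K" and "finite S" "csupp a \<subseteq> S" "csupp b \<subseteq> S"
  shows "cmod (BS K S a b) \<le> sqrt (knorm2 K a) * sqrt (knorm2 K b)"
proof -
  have "(cmod (BS K S a b))^2 \<le> knorm2 K a * knorm2 K b"
    using CS[OF pd assms(2), of a b] knorm2_S[OF assms(2,3)] knorm2_S[OF assms(2,4)] by simp
  then have "sqrt ((cmod (BS K S a b))^2) \<le> sqrt (knorm2 K a * knorm2 K b)"
    by (rule real_sqrt_le_mono)
  then show ?thesis by (simp add: real_sqrt_mult)
qed

lemma tri:
  assumes pd: "pos_def_kernel K" and fa: "finite (csupp a)" and fb: "finite (csupp b)"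
  shows "sqrt (knorm2 K (\<lambda>y. a y + b y)) \<le> sqrt (knorm2 K a) + sqrt (knorm2 K b)"
proof -
  define S where "S = csupp a \<union> csupp b"
  have fS: "finite S" unfolding S_def using fa fb by simp
  have sa: "csupp a \<subseteq> S" and sb: "csupp b \<subseteq> S" unfolding S_def by auto
  have sab: "csupp (\<lambda>y. a y + b y) \<subseteq> S" unfolding S_def by (rule csupp_add)
  have A0: "0 \<le> knorm2 K a" by (rule knorm2_nonneg[OF pd fa])
  have C0: "0 \<le> knorm2 K b" by (rule knorm2_nonneg[OF pd fb])
  have "knorm2 K (\<lambda>y. a y + b y) = Re (BS K S a a + BS K S a b + (BS K S b a + BS K S b b))"
    using knorm2_S[OF fS sab] by (simp add: BS_add1 BS_add2)
  also have "\<dots> = knorm2 K a + knorm2 K b + Re (BS K S a b) + Re (BS K S b a)"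
    using knorm2_S[OF fS sa] knorm2_S[OF fS sb] by simp
  also have "\<dots> \<le> knorm2 K a + knorm2 K b + cmod (BS K S a b) + cmod (BS K S b a)"
    using complex_Re_le_cmod add_mono by (metis add_le_cancel_left add_mono_thms_linordered_semiring(1))
  also have "\<dots> \<le> knorm2 K a + knorm2 K b + sqrt (knorm2 K a) * sqrt (knorm2 K b) + sqrt (knorm2 K b) * sqrt (knorm2 K a)"
    using CS_kn[OF pd fS sa sb] CS_kn[OF pd fS sb sa] by linarith
  also have "\<dots> = (sqrt (knorm2 K a) + sqrt (knorm2 K b))^2"
    using A0 C0 by (simp add: power2_eq_square algebra_simps)
  finally have "knorm2 K (\<lambda>y. a y + b y) \<le> (sqrt (knorm2 K a) + sqrt (knorm2 K b))^2" .
  then have "sqrt (knorm2 K (\<lambda>y. a y + b y)) \<le> sqrt ((sqrt (knorm2 K a) + sqrt (knorm2 K b))^2)"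
    by (rule real_sqrt_le_mono)
  then show ?thesis using A0 C0 by simp
qed

lemma knorm2_neg: "knorm2 K (\<lambda>y. - b y) = knorm2 K b"
  unfolding knorm2_def csupp_neg BS_neg[unfolded BS_def] ..

lemma tri_diff:
  assumes pd: "pos_def_kernel K" and fa: "finite (csupp a)" and fb: "finite (csupp b)"
  shows "sqrt (knorm2 K (\<lambda>y. a y - b y)) \<le> sqrt (knorm2 K a) + sqrt (knorm2 K b)"
  using tri[OF pd fa, of "\<lambda>y. - b y"] fb by (simp add: csupp_neg knorm2_neg)

lemma tri_rev:
  assumes pd: "pos_def_kernel K" and fa: "finite (csupp a)" and fb: "finite (csupp b)"
  shows "sqrt (knorm2 K a) \<le> sqrt (knorm2 K b) + sqrt (knorm2 K (\<lambda>y. a y - b y))"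
proof -
  have "finite (csupp (\<lambda>y. a y - b y))" using csupp_diff fa fb finite_subset by (metis finite_Un)
  from tri[OF pd fb this] show ?thesis by simp
qed

lemma fin_diff:
  assumes "finite (csupp a)" "finite (csupp b)"
  shows "finite (csupp (\<lambda>y. a y - b y))"
  by (rule finite_subset[OF csupp_diff]) (use assms in simp)

lemma kfun_diff:
  assumes fa: "finite (csupp a)" and fb: "finite (csupp b)"
  shows "kfun K (\<lambda>y. a y - b y) z = kfun K a z - kfun K b z"
proof -
  define S where "S = csupp a \<union> csupp b"
  have fS: "finite S" unfolding S_def using fa fb by simp
  have sa: "csupp a \<subseteq> S" and sb: "csupp b \<subseteq> S" unfolding S_def by auto
  have sab: "csupp (\<lambda>y. a y - b y) \<subseteq> S" unfolding S_def by (rule csupp_diff)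
  show ?thesis unfolding kfun_S[OF fS sa] kfun_S[OF fS sb] kfun_S[OF fS sab]
    by (simp add: sum_subtractf left_diff_distrib)
qed

lemma zero_lim:
  assumes pd: "pos_def_kernel K" and ap: "approx_seq K e (\<lambda>_. 0)"
  shows "(\<lambda>n. knorm2 K (e n)) \<longlonglongrightarrow> 0"
proof -
  have fin: "\<And>n. finite (csupp (e n))" using ap unfolding approx_seq_def by blast
  have cau: "\<And>r. r > 0 \<Longrightarrow> \<exists>N. \<forall>m\<ge>N. \<forall>n\<ge>N. knorm2 K (\<lambda>y. e m y - e n y) < r"
    using ap unfolding approx_seq_def by blast
  have pt: "\<And>z. (\<lambda>n. kfun K (e n) z) \<longlonglongrightarrow> 0" using ap unfolding approx_seq_def by blast
  obtain N0 where N0: "\<forall>m\<ge>N0. \<forall>n\<ge>N0. knorm2 K (\<lambda>y. e m y - e n y) < 1"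
    using cau[of 1] by auto
  define M where "M = sqrt (knorm2 K (e N0)) + 1"
  have M1: "1 \<le> M" unfolding M_def using knorm2_nonneg[OF pd fin] by simp
  have bnd: "sqrt (knorm2 K (e n)) \<le> M" if "n \<ge> N0" for n
  proof -
    have "sqrt (knorm2 K (e n)) \<le> sqrt (knorm2 K (e N0)) + sqrt (knorm2 K (\<lambda>y. e n y - e N0 y))"
      by (rule tri_rev[OF pd fin fin])
    moreover have "sqrt (knorm2 K (\<lambda>y. e n y - e N0 y)) < 1" using N0 that by (simp add: real_sqrt_lt_1_iff)
    ultimately show ?thesis unfolding M_def by linarith
  qed
  show ?thesis
  proof (rule LIMSEQ_I)
    fix r :: real assume r: "0 < r"
    define d where "d = r / (2 * (M + 1))"
    have d0: "0 < d" using r M1 by (simp add: d_def)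
    have dM: "d * M \<le> r / 2" using r M1 by (simp add: d_def field_simps)
    obtain N1 where N1: "\<forall>m\<ge>N1. \<forall>n\<ge>N1. knorm2 K (\<lambda>y. e m y - e n y) < d^2"
      using cau[of "d^2"] d0 by auto
    define m where "m = max N0 N1"
    define g where "g n = (\<Sum>x\<in>csupp (e m). cnj (e m x) * kfun K (e n) x)" for n
    have "g \<longlonglongrightarrow> (\<Sum>x\<in>csupp (e m). cnj (e m x) * 0)"
      unfolding g_def by (intro tendsto_sum tendsto_mult_left pt)
    then have "g \<longlonglongrightarrow> 0" by simp
    then obtain N2 where N2: "\<forall>n\<ge>N2. cmod (g n) < r / 2"
      using LIMSEQ_D[of g 0 "r/2"] r by auto
    show "\<exists>no. \<forall>n\<ge>no. norm (knorm2 K (e n) - 0) < r"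
    proof (intro exI allI impI)
      fix n assume n: "max m N2 \<le> n"
      define S where "S = csupp (e m) \<union> csupp (e n)"
      define dd where "dd = (\<lambda>y. e n y - e m y)"
      have fS: "finite S" unfolding S_def using fin by simp
      have sm: "csupp (e m) \<subseteq> S" and sn: "csupp (e n) \<subseteq> S" unfolding S_def by auto
      have "csupp dd \<subseteq> csupp (e n) \<union> csupp (e m)" unfolding dd_def by (rule csupp_diff)
      then have sd: "csupp dd \<subseteq> S" unfolding S_def by auto
      have kn: "knorm2 K (e n) = Re (BS K S (e n) (e n))" by (rule knorm2_S[OF fS sn])
      have en: "(\<lambda>y. e m y + dd y) = e n" unfolding dd_def by auto
      have "BS K S (\<lambda>y. e m y + dd y) (e n) = BS K S (e m) (e n) + BS K S dd (e n)" by (rule BS_add1)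
      then have split: "BS K S (e n) (e n) = BS K S (e m) (e n) + BS K S dd (e n)" unfolding en .
      have "BS K S (e m) (e n) = (\<Sum>x\<in>S. cnj (e m x) * kfun K (e n) x)" by (rule BS_kfun[OF fS sn])
      also have "\<dots> = g n" unfolding g_def
        by (rule sum.mono_neutral_right[OF fS sm]) (auto simp: csupp_def)
      finally have gm: "BS K S (e m) (e n) = g n" .
      have c1: "cmod (BS K S dd (e n)) \<le> sqrt (knorm2 K dd) * sqrt (knorm2 K (e n))"
        by (rule CS_kn[OF pd fS sd sn])
      have "knorm2 K dd < d^2" using N1 n unfolding dd_def m_def by auto
      then have "sqrt (knorm2 K dd) < sqrt (d^2)" by (rule real_sqrt_less_mono)
      then have sdd: "sqrt (knorm2 K dd) < d" using d0 by simp
      have bn: "sqrt (knorm2 K (e n)) \<le> M" using bnd n unfolding m_def by auto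
      have "sqrt (knorm2 K dd) * sqrt (knorm2 K (e n)) \<le> d * M"
        using sdd bn d0 knorm2_nonneg[OF pd fin] by (intro mult_mono) auto
      then have c2: "cmod (BS K S dd (e n)) \<le> r / 2" using c1 dM by linarith
      have c3: "cmod (g n) < r / 2" using N2 n by auto
      have "knorm2 K (e n) = Re (g n) + Re (BS K S dd (e n))" using kn split gm by simp
      also have "\<dots> \<le> cmod (g n) + cmod (BS K S dd (e n))"
        by (intro add_mono complex_Re_le_cmod)
      finally have "knorm2 K (e n) < r" using c2 c3 by linarith
      moreover have "0 \<le> knorm2 K (e n)" by (rule knorm2_nonneg[OF pd fin])
      ultimately show "norm (knorm2 K (e n) - 0) < r" by simp
    qed
  qed
qed

lemma kn_conv:
  assumes pd: "pos_def_kernel K" and ap: "approx_seq K c f"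
  shows "\<exists>r. (\<lambda>n. knorm2 K (c n)) \<longlonglongrightarrow> r"
proof -
  have fin: "\<And>n. finite (csupp (c n))" using ap unfolding approx_seq_def by blast
  have cau: "\<And>r. r > 0 \<Longrightarrow> \<exists>N. \<forall>m\<ge>N. \<forall>n\<ge>N. knorm2 K (\<lambda>y. c m y - c n y) < r"
    using ap unfolding approx_seq_def by blast
  have "Cauchy (\<lambda>n. sqrt (knorm2 K (c n)))"
  proof (rule CauchyI)
    fix e :: real assume e: "0 < e"
    obtain N where N: "\<forall>m\<ge>N. \<forall>n\<ge>N. knorm2 K (\<lambda>y. c m y - c n y) < e^2"
      using cau[of "e^2"] e by auto
    have "\<forall>m\<ge>N. \<forall>n\<ge>N. norm (sqrt (knorm2 K (c m)) - sqrt (knorm2 K (c n))) < e"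
    proof (intro allI impI)
      fix m n assume m: "N \<le> m" and n: "N \<le> n"
      have a: "sqrt (knorm2 K (\<lambda>y. c m y - c n y)) < e"
        using real_sqrt_less_mono[of _ "e^2"] N m n e by fastforce
      have b: "sqrt (knorm2 K (\<lambda>y. c n y - c m y)) < e"
        using real_sqrt_less_mono[of _ "e^2"] N m n e by fastforce
      have "sqrt (knorm2 K (c m)) \<le> sqrt (knorm2 K (c n)) + sqrt (knorm2 K (\<lambda>y. c m y - c n y))"
        by (rule tri_rev[OF pd fin fin])
      moreover have "sqrt (knorm2 K (c n)) \<le> sqrt (knorm2 K (c m)) + sqrt (knorm2 K (\<lambda>y. c n y - c m y))"
        by (rule tri_rev[OF pd fin fin])
      ultimately show "norm (sqrt (knorm2 K (c m)) - sqrt (knorm2 K (c n))) < e"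
        using a b by (simp add: abs_less_iff)
    qed
    then show "\<exists>M. \<forall>m\<ge>M. \<forall>n\<ge>M. norm (sqrt (knorm2 K (c m)) - sqrt (knorm2 K (c n))) < e" by blast
  qed
  then obtain L where L: "(\<lambda>n. sqrt (knorm2 K (c n))) \<longlonglongrightarrow> L"
    by (auto simp: Cauchy_convergent_iff convergent_def)
  then have "(\<lambda>n. (sqrt (knorm2 K (c n)))^2) \<longlonglongrightarrow> L^2" by (rule tendsto_power)
  moreover have "\<And>n. (sqrt (knorm2 K (c n)))^2 = knorm2 K (c n)"
    using knorm2_nonneg[OF pd fin] by simp
  ultimately show ?thesis by auto
qed

lemma kn_uniq:
  assumes pd: "pos_def_kernel K" and apc: "approx_seq K c f" and apd: "approx_seq K d f"
    and lc: "(\<lambda>n. knorm2 K (c n)) \<longlonglongrightarrow> r" and ld: "(\<lambda>n. knorm2 K (d n)) \<longlonglongrightarrow> s"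
  shows "r = s"
proof -
  have fc: "\<And>n. finite (csupp (c n))" using apc unfolding approx_seq_def by blast
  have cc: "\<And>r. r > 0 \<Longrightarrow> \<exists>N. \<forall>m\<ge>N. \<forall>n\<ge>N. knorm2 K (\<lambda>y. c m y - c n y) < r"
    using apc unfolding approx_seq_def by blast
  have pc: "\<And>z. (\<lambda>n. kfun K (c n) z) \<longlonglongrightarrow> f z" using apc unfolding approx_seq_def by blast
  have fd: "\<And>n. finite (csupp (d n))" using apd unfolding approx_seq_def by blast
  have cd: "\<And>r. r > 0 \<Longrightarrow> \<exists>N. \<forall>m\<ge>N. \<forall>n\<ge>N. knorm2 K (\<lambda>y. d m y - d n y) < r"
    using apd unfolding approx_seq_def by blast
  have pd': "\<And>z. (\<lambda>n. kfun K (d n) z) \<longlonglongrightarrow> f z" using apd unfolding approx_seq_def by blast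
  define e where "e n = (\<lambda>y. c n y - d n y)" for n
  have fe: "\<And>n. finite (csupp (e n))" unfolding e_def by (rule fin_diff[OF fc fd])
  have ape: "approx_seq K e (\<lambda>_. 0)"
    unfolding approx_seq_def
  proof (intro conjI allI impI)
    fix n show "finite (csupp (e n))" by (rule fe)
  next
    fix z
    have "(\<lambda>n. kfun K (c n) z - kfun K (d n) z) \<longlonglongrightarrow> f z - f z"
      by (intro tendsto_diff pc pd')
    then show "(\<lambda>n. kfun K (e n) z) \<longlonglongrightarrow> 0"
      unfolding e_def kfun_diff[OF fc fd] by simp
  next
    fix r :: real assume r: "0 < r"
    obtain N1 where N1: "\<forall>m\<ge>N1. \<forall>n\<ge>N1. knorm2 K (\<lambda>y. c m y - c n y) < r / 4"
      using cc[of "r/4"] r by auto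
    obtain N2 where N2: "\<forall>m\<ge>N2. \<forall>n\<ge>N2. knorm2 K (\<lambda>y. d m y - d n y) < r / 4"
      using cd[of "r/4"] r by auto
    show "\<exists>N. \<forall>m\<ge>N. \<forall>n\<ge>N. knorm2 K (\<lambda>y. e m y - e n y) < r"
    proof (intro exI allI impI)
      fix m n assume m: "max N1 N2 \<le> m" and n: "max N1 N2 \<le> n"
      have eq: "(\<lambda>y. e m y - e n y) = (\<lambda>y. (\<lambda>y. c m y - c n y) y - (\<lambda>y. d m y - d n y) y)"
        unfolding e_def by (auto simp: algebra_simps)
      have "sqrt (knorm2 K (\<lambda>y. e m y - e n y)) \<le>
          sqrt (knorm2 K (\<lambda>y. c m y - c n y)) + sqrt (knorm2 K (\<lambda>y. d m y - d n y))"
        unfolding eq by (rule tri_diff[OF pd fin_diff[OF fc fc] fin_diff[OF fd fd]])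
      also have "\<dots> < sqrt (r/4) + sqrt (r/4)"
        using N1 N2 m n by (intro add_strict_mono real_sqrt_less_mono) auto
      also have "\<dots> = sqrt r" by (simp add: real_sqrt_divide)
      finally have "sqrt (knorm2 K (\<lambda>y. e m y - e n y)) < sqrt r" .
      then show "knorm2 K (\<lambda>y. e m y - e n y) < r" by simp
    qed
  qed
  have z: "(\<lambda>n. knorm2 K (e n)) \<longlonglongrightarrow> 0" by (rule zero_lim[OF pd ape])
  then have zs: "(\<lambda>n. sqrt (knorm2 K (e n))) \<longlonglongrightarrow> 0" using tendsto_real_sqrt by fastforce
  have "(\<lambda>n. sqrt (knorm2 K (c n)) - sqrt (knorm2 K (d n))) \<longlonglongrightarrow> 0"
  proof (rule Lim_null_comparison[OF _ zs], rule always_eventually, rule allI)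
    fix n
    have "sqrt (knorm2 K (c n)) \<le> sqrt (knorm2 K (d n)) + sqrt (knorm2 K (e n))"
      unfolding e_def by (rule tri_rev[OF pd fc fd])
    moreover have "sqrt (knorm2 K (d n)) \<le> sqrt (knorm2 K (c n)) + sqrt (knorm2 K (\<lambda>y. d n y - c n y))"
      by (rule tri_rev[OF pd fd fc])
    moreover have "knorm2 K (\<lambda>y. d n y - c n y) = knorm2 K (e n)"
      using knorm2_neg[of K "e n"] unfolding e_def by (simp add: minus_diff_eq)
    ultimately show "norm (sqrt (knorm2 K (c n)) - sqrt (knorm2 K (d n))) \<le> sqrt (knorm2 K (e n))"
      by (simp add: abs_le_iff)
  qed
  moreover have "(\<lambda>n. sqrt (knorm2 K (c n)) - sqrt (knorm2 K (d n))) \<longlonglongrightarrow> sqrt r - sqrt s"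
    by (intro tendsto_diff tendsto_real_sqrt lc ld)
  ultimately have "sqrt r - sqrt s = 0" using LIMSEQ_unique by blast
  moreover have "0 \<le> r" using LIMSEQ_le_const[OF lc] knorm2_nonneg[OF pd fc] by blast
  moreover have "0 \<le> s" using LIMSEQ_le_const[OF ld] knorm2_nonneg[OF pd fd] by blast
  ultimately show ?thesis by simp
qed

lemma rk_lim:
  assumes pd: "pos_def_kernel K" and ap: "approx_seq K c f"
  shows "(\<lambda>n. knorm2 K (c n)) \<longlonglongrightarrow> rkhs_norm2 K f"
proof -
  obtain r where r: "(\<lambda>n. knorm2 K (c n)) \<longlonglongrightarrow> r" using kn_conv[OF pd ap] by blast
  have "rkhs_norm2 K f = r"
    unfolding rkhs_norm2_def
  proof (rule the_equality)
    show "\<exists>c. approx_seq K c f \<and> (\<lambda>n. knorm2 K (c n)) \<longlonglongrightarrow> r" using ap r by blast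
  next
    fix s assume "\<exists>c. approx_seq K c f \<and> (\<lambda>n. knorm2 K (c n)) \<longlonglongrightarrow> s"
    then obtain d where "approx_seq K d f" "(\<lambda>n. knorm2 K (d n)) \<longlonglongrightarrow> s" by blast
    then show "s = r" using kn_uniq[OF pd _ ap _ r] by blast
  qed
  then show ?thesis using r by simp
qed

theorem lemma8p1:
  fixes K :: "'a \<Rightarrow> 'a \<Rightarrow> complex" and F :: "'a set" and l :: complex
  assumes "pos_def_kernel K"
    and "\<And>x. in_rkhs K (delta x)"
    and "finite F" and "F \<noteq> {}"
    and "is_eigenvalue_on K F l"
  shows "Im l = 0 \<and> 1 \<le> Re l * (\<Sum>x\<in>F. rkhs_norm2 K (delta x))"
proof -
  note pd = assms(1) and fF = assms(3)
  obtain v where vne: "\<exists>x\<in>F. v x \<noteq> 0" and ev: "\<And>x. x \<in> F \<Longrightarrow> (\<Sum>y\<in>F. K x y * v y) = l * v x"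
    using assms(5) unfolding is_eigenvalue_on_def by blast
  define w where "w x = (if x \<in> F then v x else 0)" for x
  have sw: "csupp w \<subseteq> F" unfolding w_def csupp_def by auto
  define Q where "Q = (\<Sum>x\<in>F. (cmod (v x))^2)"
  have Q0: "0 < Q"
  proof -
    obtain x0 where "x0 \<in> F" "v x0 \<noteq> 0" using vne by blast
    then show ?thesis unfolding Q_def by (intro sum_pos2[OF fF, of x0]) auto
  qed
  define G where "G = BS K F w w"
  have "G = (\<Sum>x\<in>F. cnj (v x) * (\<Sum>y\<in>F. K x y * v y))"
    unfolding G_def BS_def w_def by (simp add: sum_distrib_left mult_ac)
  also have "\<dots> = (\<Sum>x\<in>F. l * (v x * cnj (v x)))" by (intro sum.cong refl) (simp add: ev[symmetric] mult_ac)
  also have "\<dots> = l * of_real Q" unfolding Q_def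
    by (simp add: sum_distrib_left complex_norm_square[symmetric])
  finally have GQ: "G = l * of_real Q" .
  have ImG: "Im G = 0" unfolding G_def by (rule pd_real(1)[OF pd fF])
  then have Iml: "Im l = 0" using GQ Q0 by simp
  have ReG: "Re G = Re l * Q" using GQ Iml by simp
  have knw: "knorm2 K w = Re G" unfolding G_def by (rule knorm2_S[OF fF sw])
  have ReG0: "0 \<le> Re G" unfolding G_def by (rule pd_real(2)[OF pd fF])
  have bound: "(cmod (v y))^2 \<le> Re G * rkhs_norm2 K (delta y)" if yF: "y \<in> F" for y
  proof -
    obtain c where ap: "approx_seq K c (delta y)" using assms(2) unfolding in_rkhs_def by blast
    have fc: "\<And>n. finite (csupp (c n))" using ap unfolding approx_seq_def by blast
    have pc: "\<And>z. (\<lambda>n. kfun K (c n) z) \<longlonglongrightarrow> delta y z" using ap unfolding approx_seq_def by blast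
    define X where "X n = (\<Sum>x\<in>F. cnj (v x) * kfun K (c n) x)" for n
    have "X \<longlonglongrightarrow> (\<Sum>x\<in>F. cnj (v x) * delta y x)"
      unfolding X_def by (intro tendsto_sum tendsto_mult_left pc)
    also have "(\<Sum>x\<in>F. cnj (v x) * delta y x) = cnj (v y)"
    proof -
      have "(\<lambda>x. cnj (v x) * delta y x) = (\<lambda>x. if x = y then cnj (v x) else 0)"
        by (auto simp: delta_def)
      then have "(\<Sum>x\<in>F. cnj (v x) * delta y x) = (\<Sum>x\<in>F. if x = y then cnj (v x) else 0)"
        by (rule arg_cong)
      then show ?thesis using yF fF by simp
    qed
    finally have X: "X \<longlonglongrightarrow> cnj (v y)" .
    have le: "(cmod (X n))^2 \<le> Re G * knorm2 K (c n)" for n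
    proof -
      define S where "S = F \<union> csupp (c n)"
      have fS: "finite S" unfolding S_def using fF fc by simp
      have sF: "F \<subseteq> S" and sc: "csupp (c n) \<subseteq> S" unfolding S_def by auto
      have swS: "csupp w \<subseteq> S" using sw sF by blast
      have "BS K S w (c n) = (\<Sum>x\<in>S. cnj (w x) * kfun K (c n) x)" by (rule BS_kfun[OF fS sc])
      also have "\<dots> = (\<Sum>x\<in>F. cnj (w x) * kfun K (c n) x)"
        by (rule sum.mono_neutral_right[OF fS sF]) (auto simp: w_def)
      also have "\<dots> = X n" unfolding X_def w_def by simp
      finally have "X n = BS K S w (c n)" by simp
      then have "cmod (X n) \<le> sqrt (knorm2 K w) * sqrt (knorm2 K (c n))"
        using CS_kn[OF pd fS swS sc] by simp
      then have "(cmod (X n))^2 \<le> (sqrt (knorm2 K w) * sqrt (knorm2 K (c n)))^2"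
        by (rule power_mono) simp
      also have "\<dots> = Re G * knorm2 K (c n)"
        using knw ReG0 knorm2_nonneg[OF pd fc] by (simp add: power_mult_distrib)
      finally show ?thesis .
    qed
    have "(\<lambda>n. (cmod (X n))^2) \<longlonglongrightarrow> (cmod (cnj (v y)))^2"
      by (intro tendsto_power tendsto_norm X)
    moreover have "(\<lambda>n. Re G * knorm2 K (c n)) \<longlonglongrightarrow> Re G * rkhs_norm2 K (delta y)"
      by (intro tendsto_mult_left rk_lim[OF pd ap])
    ultimately have "(cmod (cnj (v y)))^2 \<le> Re G * rkhs_norm2 K (delta y)"
      using le by (intro LIMSEQ_le) auto
    then show ?thesis by simp
  qed
  have "Q \<le> (\<Sum>y\<in>F. Re G * rkhs_norm2 K (delta y))"
    unfolding Q_def by (rule sum_mono) (rule bound)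
  also have "\<dots> = Q * (Re l * (\<Sum>x\<in>F. rkhs_norm2 K (delta x)))"
    unfolding ReG by (simp add: sum_distrib_left mult_ac)
  finally have "Q * 1 \<le> Q * (Re l * (\<Sum>x\<in>F. rkhs_norm2 K (delta x)))" by simp
  then have "1 \<le> Re l * (\<Sum>x\<in>F. rkhs_norm2 K (delta x))"
    using Q0 by (simp only: mult_le_cancel_left_pos)
  then show ?thesis using Iml by simp
qed

end
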